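(* Let $E$ be a row-finite graph, $k$ a field, $h$ a positive integer, and suppose $\{1,\dots,h\}=\bigsqcup_{v\in E^0}Z(v)$ for subsets $Z(v)$. Let $\sigma=\bigsqcup_v\sigma_v$ be a permutation of $\{1,\dots,h\}$ where each $\sigma_v$ is a permutation of $Z(v)$, and set $S=\sum_{v\in E^0}\sum_{t\in Z(v)}vE_{t,\sigma_v(t)}\in M_h(L_k(E))$. Then $SS^*=S^*S=\sum_{v}\sum_{t\in Z(v)}vE_{t,t}$ is a projection in $M_h(L_k(E))$, and $$[S+(1_h-SS^* )]_1=\sum_{v\in E^0}[\operatorname{sign}(\sigma_v)v]_1\in K_1(L_k(E)).$$
   Context: $L_k(E)$ is the Leavitt path algebra of the row-finite graph $E$ (generated by $E^0\cup E^1\cup\{e^*\}$ with relations $vw=\delta_{v,w}v$, $s(e)e=e=er(e)$, $r(e)e^*=e^*=e^*s(e)$, $e^*f=\delta_{e,f}r(e)$, $v=\sum_{s(e)=v}ee^*$ for non-sinks), with involution fixing vertices and sending $e\mapsto e^*$. $E_{s,t}$ are matrix units; $1_h$ is the identity of $M_h$ over the unitization $\widetilde{L_k(E)}$, and $[U]_1$ denotes the class in $K_1(L_k(E))$ of an invertible matrix over $\widetilde{L_k(E)}$ congruent to $1$ modulo $L_k(E)$. For $\lambda\in k^\times$ and $v\in E^0$, $[\lambda v]_1$ denotes the class of $\lambda v+(1-v)$. *)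

theory Defs
  imports "HOL-Library.Poly_Mapping" "HOL-Library.Function_Algebras" "HOL-Combinatorics.Permutations"
begin

text \<open>Words in the generators form the free monoid (written additively, so
that the library's convolution algebra on finitely supported functions applies).\<close>

datatype 'x word = Word "'x list"

instantiation word :: (type) monoid_add
begin
definition zero_word :: "'x word" where "zero_word = Word []"
fun plus_word :: "'x word \<Rightarrow> 'x word \<Rightarrow> 'x word" where
  "plus_word (Word u) (Word w) = Word (u @ w)"
instance
proof
  fix a b c :: "'x word"
  show "a + b + c = a + (b + c)" by (cases a; cases b; cases c) simp
  show "0 + a = a" by (cases a) (simp add: zero_word_def)
  show "a + 0 = a" by (cases a) (simp add: zero_word_def)
qed
end

text \<open>Generators of the Leavitt path algebra: vertices, real edges, ghost edges.\<close>
datatype ('v, 'e) lgen = Vx 'v | Ed 'e | Gh 'e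

text \<open>The free unital k-algebra k<X> on X = E^0 \<union> E^1 \<union> (E^1)^*.\<close>
type_synonym ('v, 'e, 'k) freealg = "('v, 'e) lgen word \<Rightarrow>\<^sub>0 'k"

definition gen :: "('v, 'e) lgen \<Rightarrow> ('v, 'e, 'k::field) freealg" where
  "gen x = Poly_Mapping.single (Word [x]) 1"

text \<open>All relations lie in the augmentation ideal, so the
quotient k<X>/lp_ideal s r is exactly the unitization of L_k(E).\<close>

inductive_set lp_ideal :: "('e \<Rightarrow> 'v) \<Rightarrow> ('e \<Rightarrow> 'v) \<Rightarrow> ('v, 'e, 'k::field) freealg set"
  for s r where
  rel_vv: "gen (Vx v) * gen (Vx w) - (if v = w then gen (Vx v) else 0) \<in> lp_ideal s r"
| rel_se: "gen (Vx (s e)) * gen (Ed e) - gen (Ed e) \<in> lp_ideal s r"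
| rel_er: "gen (Ed e) * gen (Vx (r e)) - gen (Ed e) \<in> lp_ideal s r"
| rel_rg: "gen (Vx (r e)) * gen (Gh e) - gen (Gh e) \<in> lp_ideal s r"
| rel_gs: "gen (Gh e) * gen (Vx (s e)) - gen (Gh e) \<in> lp_ideal s r"
| rel_ck1: "gen (Gh e) * gen (Ed f) - (if e = f then gen (Vx (r e)) else 0) \<in> lp_ideal s r"
| rel_ck2: "{e. s e = v} \<noteq> {} \<Longrightarrow>
     gen (Vx v) - (\<Sum>e\<in>{e. s e = v}. gen (Ed e) * gen (Gh e)) \<in> lp_ideal s r"
| zero: "0 \<in> lp_ideal s r"
| add: "a \<in> lp_ideal s r \<Longrightarrow> b \<in> lp_ideal s r \<Longrightarrow> a + b \<in> lp_ideal s r"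
| mult_left: "a \<in> lp_ideal s r \<Longrightarrow> x * a \<in> lp_ideal s r"
| mult_right: "a \<in> lp_ideal s r \<Longrightarrow> a * x \<in> lp_ideal s r"

fun gstar :: "('v, 'e) lgen \<Rightarrow> ('v, 'e) lgen" where
  "gstar (Vx v) = Vx v" | "gstar (Ed e) = Gh e" | "gstar (Gh e) = Ed e"

fun wstar :: "'x word \<Rightarrow> ('x \<Rightarrow> 'x) \<Rightarrow> 'x word" where
  "wstar (Word w) g = Word (rev (map g w))"

definition lpstar :: "('v, 'e, 'k::field) freealg \<Rightarrow> ('v, 'e, 'k) freealg" where
  "lpstar p = (\<Sum>w\<in>Poly_Mapping.keys p. Poly_Mapping.single (wstar w gstar) (Poly_Mapping.lookup p w))"

section \<open>Matrices (indices 1..m), represented as functions nat \<Rightarrow> nat \<Rightarrow> ring\<close>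

definition mmul :: "nat \<Rightarrow> (nat \<Rightarrow> nat \<Rightarrow> 'a::semiring_0) \<Rightarrow> (nat \<Rightarrow> nat \<Rightarrow> 'a) \<Rightarrow> nat \<Rightarrow> nat \<Rightarrow> 'a" where
  "mmul m A B = (\<lambda>i j. \<Sum>l\<in>{1..m}. A i l * B l j)"

definition mone :: "nat \<Rightarrow> nat \<Rightarrow> 'a::{zero,one}" where
  "mone = (\<lambda>i j. if i = j then 1 else 0)"

definition munit :: "'a::zero \<Rightarrow> nat \<Rightarrow> nat \<Rightarrow> nat \<Rightarrow> nat \<Rightarrow> 'a" where
  "munit a s t = (\<lambda>i j. if i = s \<and> j = t then a else 0)"

definition mstar :: "(nat \<Rightarrow> nat \<Rightarrow> ('v, 'e, 'k::field) freealg) \<Rightarrow> nat \<Rightarrow> nat \<Rightarrow> ('v, 'e, 'k) freealg" where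
  "mstar A = (\<lambda>i j. lpstar (A j i))"

text \<open>Entrywise congruence of m x m matrices modulo an ideal J
 (= equality of the images as matrices over the quotient ring).\<close>
definition mcong :: "'a::ab_group_add set \<Rightarrow> nat \<Rightarrow> (nat \<Rightarrow> nat \<Rightarrow> 'a) \<Rightarrow> (nat \<Rightarrow> nat \<Rightarrow> 'a) \<Rightarrow> bool" where
  "mcong J m A B \<longleftrightarrow> (\<forall>i\<in>{1..m}. \<forall>j\<in>{1..m}. A i j - B i j \<in> J)"

definition elem :: "nat \<Rightarrow> nat \<Rightarrow> 'a::ring_1 \<Rightarrow> nat \<Rightarrow> nat \<Rightarrow> 'a" where
  "elem p q a = (\<lambda>i j. (if i = j then 1 else 0) + (if i = p \<and> j = q then a else 0))"

text \<open>The elementary subgroup E_m: generated by the e_{ij}(a) (closed under inverses since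
 e_{ij}(a)^{-1} = e_{ij}(-a)).\<close>
inductive_set elem_group :: "nat \<Rightarrow> (nat \<Rightarrow> nat \<Rightarrow> 'a::ring_1) set" for m where
  one: "mone \<in> elem_group m"
| step: "W \<in> elem_group m \<Longrightarrow> p \<in> {1..m} \<Longrightarrow> q \<in> {1..m} \<Longrightarrow> p \<noteq> q \<Longrightarrow>
     mmul m (elem p q a) W \<in> elem_group m"

definition mpad :: "nat \<Rightarrow> (nat \<Rightarrow> nat \<Rightarrow> 'a::{zero,one}) \<Rightarrow> nat \<Rightarrow> nat \<Rightarrow> 'a" where
  "mpad n A = (\<lambda>i j. if i \<le> n \<and> j \<le> n then A i j else (if i = j then 1 else 0))"

definition minvertible_mod :: "'a::ring_1 set \<Rightarrow> nat \<Rightarrow> (nat \<Rightarrow> nat \<Rightarrow> 'a) \<Rightarrow> bool" where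
  "minvertible_mod J n U \<longleftrightarrow> (\<exists>V. mcong J n (mmul n U V) mone \<and> mcong J n (mmul n V U) mone)"

text \<open>Equality of K_1-classes over R/J: [U] = [V] in GL(R/J)/E(R/J), i.e. after
 stabilisation U = W V for an elementary matrix W over R/J
 (elementary matrices over R/J lift to elementary matrices over R).\<close>
definition k1_eq :: "'a::ring_1 set \<Rightarrow> nat \<Rightarrow> (nat \<Rightarrow> nat \<Rightarrow> 'a) \<Rightarrow> nat \<Rightarrow> (nat \<Rightarrow> nat \<Rightarrow> 'a) \<Rightarrow> bool" where
  "k1_eq J n U n' V \<longleftrightarrow>
     (\<exists>m\<ge>max n n'. \<exists>W\<in>elem_group m. mcong J m (mpad n U) (mmul m W (mpad n' V)))"

text \<open>Block-diagonal matrix diag(x_1,...,x_r) of 1 x 1 blocks; its K_1-class is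
 [x_1]_1 + ... + [x_r]_1.\<close>
definition mdiag :: "'a::{zero,one} list \<Rightarrow> nat \<Rightarrow> nat \<Rightarrow> 'a" where
  "mdiag xs = (\<lambda>i j. if i = j then (if 1 \<le> i \<and> i \<le> length xs then xs ! (i - 1) else 1) else 0)"

end

theory Submission
  imports Defs
begin


definition isideal :: "'a::ring_1 set \<Rightarrow> bool" where
  "isideal J \<longleftrightarrow> 0 \<in> J \<and> (\<forall>a b. a \<in> J \<longrightarrow> b \<in> J \<longrightarrow> a + b \<in> J)
     \<and> (\<forall>a x. a \<in> J \<longrightarrow> x * a \<in> J) \<and> (\<forall>a x. a \<in> J \<longrightarrow> a * x \<in> J)"

lemma isideal_zero: "isideal J \<Longrightarrow> 0 \<in> J" by (simp add: isideal_def)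
lemma isideal_add: "isideal J \<Longrightarrow> a \<in> J \<Longrightarrow> b \<in> J \<Longrightarrow> a + b \<in> J" by (simp add: isideal_def)
lemma isideal_ml: "isideal J \<Longrightarrow> a \<in> J \<Longrightarrow> x * a \<in> J" by (simp add: isideal_def)
lemma isideal_mr: "isideal J \<Longrightarrow> a \<in> J \<Longrightarrow> a * x \<in> J" by (simp add: isideal_def)
lemma isideal_neg: "isideal J \<Longrightarrow> a \<in> J \<Longrightarrow> - a \<in> J"
  using isideal_ml[of J a "-1"] by simp
lemma isideal_diff: "isideal J \<Longrightarrow> a \<in> J \<Longrightarrow> b \<in> J \<Longrightarrow> a - b \<in> J"
  using isideal_add[of J a "-b"] isideal_neg[of J b] by simp
lemma isideal_sum: "isideal J \<Longrightarrow> (\<And>x. x \<in> A \<Longrightarrow> f x \<in> J) \<Longrightarrow> sum f A \<in> J"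
proof (induction A rule: infinite_finite_induct)
  case (infinite A) then show ?case by (simp add: isideal_zero)
next
  case empty then show ?case by (simp add: isideal_zero)
next
  case (insert x F) then show ?case by (simp add: isideal_add)
qed

lemma isideal_int0: "isideal {0::int}" by (simp add: isideal_def)

lemma sum_apply2: "(sum f A) i j = (\<Sum>x\<in>A. f x i j)"
proof (induction A rule: infinite_finite_induct)
  case (infinite A) then show ?case by simp
next
  case empty then show ?case by simp
next
  case (insert x F) then show ?case by simp
qed

lemma mmul_assoc: "mmul n (mmul n A B) C = mmul n A (mmul n B C)"
  unfolding mmul_def
  by (auto simp: fun_eq_iff sum_distrib_left sum_distrib_right mult.assoc intro: sum.swap)

lemma mmul_row_sparse:
  assumes "f i \<in> {1..n}" "\<And>l. l \<in> {1..n} \<Longrightarrow> l \<noteq> f i \<Longrightarrow> A i l = 0"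
  shows "mmul n A B i j = A i (f i) * B (f i) j"
proof -
  have "mmul n A B i j = (\<Sum>l\<in>{1..n}. if l = f i then A i (f i) * B (f i) j else 0)"
    unfolding mmul_def using assms(2) by (intro sum.cong) auto
  also have "\<dots> = A i (f i) * B (f i) j" using assms(1) by simp
  finally show ?thesis .
qed

lemma mmul_col_sparse:
  assumes "f j \<in> {1..n}" "\<And>l. l \<in> {1..n} \<Longrightarrow> l \<noteq> f j \<Longrightarrow> B l j = 0"
  shows "mmul n A B i j = A i (f j) * B (f j) j"
proof -
  have "mmul n A B i j = (\<Sum>l\<in>{1..n}. if l = f j then A i (f j) * B (f j) j else 0)"
    unfolding mmul_def using assms(2) by (intro sum.cong) auto
  also have "\<dots> = A i (f j) * B (f j) j" using assms(1) by simp
  finally show ?thesis .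
qed

lemma mmul_mone_left: fixes B :: "nat \<Rightarrow> nat \<Rightarrow> 'a::semiring_1" shows "i \<in> {1..n} \<Longrightarrow> mmul n mone B i j = B i j"
  by (subst mmul_row_sparse[where f=id]) (auto simp: mone_def)
lemma mmul_mone_right: fixes A :: "nat \<Rightarrow> nat \<Rightarrow> 'a::semiring_1" shows "j \<in> {1..n} \<Longrightarrow> mmul n A mone i j = A i j"
  by (subst mmul_col_sparse[where f=id]) (auto simp: mone_def)

lemma mmul_elem_left:
  assumes "i \<in> {1..n}" "q \<in> {1..n}"
  shows "mmul n (elem p q a) B i j = B i j + (if i = p then a * B q j else 0)"
proof -
  have "mmul n (elem p q a) B i j = (\<Sum>l\<in>{1..n}. (if i = l then B l j else 0) + (if i = p \<and> l = q then a * B l j else 0))"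
    unfolding mmul_def elem_def by (intro sum.cong) (auto simp: distrib_right)
  also have "\<dots> = B i j + (if i = p then a * B q j else 0)"
    using assms by (simp add: sum.distrib)
  finally show ?thesis .
qed

lemma mcong_refl: "isideal J \<Longrightarrow> mcong J n A A"
  by (simp add: mcong_def isideal_zero)
lemma mcong_eq: "isideal J \<Longrightarrow> (\<And>i j. i \<in> {1..n} \<Longrightarrow> j \<in> {1..n} \<Longrightarrow> A i j = B i j) \<Longrightarrow> mcong J n A B"
  by (simp add: mcong_def isideal_zero)
lemma mcong_sym: "isideal J \<Longrightarrow> mcong J n A B \<Longrightarrow> mcong J n B A"
  unfolding mcong_def using isideal_neg by fastforce
lemma mcong_trans: "isideal J \<Longrightarrow> mcong J n A B \<Longrightarrow> mcong J n B C \<Longrightarrow> mcong J n A C"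
  unfolding mcong_def using isideal_add by fastforce
lemma mcong_mmul:
  assumes J: "isideal J" and "mcong J n A A'" "mcong J n B B'"
  shows "mcong J n (mmul n A B) (mmul n A' B')"
  unfolding mcong_def
proof (intro ballI)
  fix i j assume ij: "i \<in> {1..n}" "j \<in> {1..n}"
  have "mmul n A B i j - mmul n A' B' i j = (\<Sum>l\<in>{1..n}. (A i l - A' i l) * B l j + A' i l * (B l j - B' l j))"
    unfolding mmul_def by (simp add: sum_subtractf[symmetric] algebra_simps)
  also have "\<dots> \<in> J"
    using assms ij unfolding mcong_def
    by (intro isideal_sum[OF J] isideal_add[OF J] isideal_mr[OF J] isideal_ml[OF J]) auto
  finally show "mmul n A B i j - mmul n A' B' i j \<in> J" .
qed

definition Ebar :: "'a::ring_1 set \<Rightarrow> nat \<Rightarrow> (nat \<Rightarrow> nat \<Rightarrow> 'a) \<Rightarrow> bool" where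
  "Ebar J n X \<longleftrightarrow> (\<exists>W\<in>elem_group n. mcong J n X W)"

lemma elem_group_mult:
  assumes "W1 \<in> elem_group n" "W2 \<in> elem_group n"
  shows "\<exists>W\<in>elem_group n. \<forall>i\<in>{1..n}. \<forall>j\<in>{1..n}. mmul n W1 W2 i j = W i j"
  using assms(1)
proof induction
  case one
  then show ?case using assms(2) by (auto simp: mmul_mone_left)
next
  case (step W p q a)
  then obtain W' where W': "W' \<in> elem_group n" "\<forall>i\<in>{1..n}. \<forall>j\<in>{1..n}. mmul n W W2 i j = W' i j" by blast
  have "mmul n (elem p q a) W' \<in> elem_group n" using W' step by (intro elem_group.step) auto
  moreover have "\<forall>i\<in>{1..n}. \<forall>j\<in>{1..n}. mmul n (mmul n (elem p q a) W) W2 i j = mmul n (elem p q a) W' i j"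
    using W' step(3,4) by (auto simp: mmul_assoc mmul_elem_left)
  ultimately show ?case by blast
qed

lemma Ebar_cong: "isideal J \<Longrightarrow> mcong J n X Y \<Longrightarrow> Ebar J n Y \<Longrightarrow> Ebar J n X"
  unfolding Ebar_def using mcong_trans by blast

lemma Ebar_mult:
  assumes J: "isideal J" and "Ebar J n X" "Ebar J n Y"
  shows "Ebar J n (mmul n X Y)"
proof -
  obtain W1 W2 where W: "W1 \<in> elem_group n" "W2 \<in> elem_group n" "mcong J n X W1" "mcong J n Y W2"
    using assms unfolding Ebar_def by blast
  obtain W where "W \<in> elem_group n" "\<forall>i\<in>{1..n}. \<forall>j\<in>{1..n}. mmul n W1 W2 i j = W i j"
    using elem_group_mult[OF W(1,2)] by blast
  then show ?thesis unfolding Ebar_def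
    using mcong_trans[OF J mcong_mmul[OF J W(3,4)] mcong_eq[OF J]] by blast
qed

lemma Ebar_mone: "isideal J \<Longrightarrow> Ebar J n mone"
  unfolding Ebar_def using elem_group.one mcong_refl by blast

lemma Ebar_elem:
  assumes J: "isideal J" and "p \<in> {1..n}" "q \<in> {1..n}" "p \<noteq> q"
  shows "Ebar J n (elem p q a)"
  unfolding Ebar_def
proof
  show "mmul n (elem p q a) mone \<in> elem_group n" using assms by (intro elem_group.step elem_group.one)
  show "mcong J n (elem p q a) (mmul n (elem p q a) mone)"
    by (rule mcong_eq[OF J]) (simp add: mmul_mone_right)
qed



definition elt :: "('v \<Rightarrow> 'a::ring_1) \<Rightarrow> 'v set \<Rightarrow> int \<Rightarrow> ('v \<Rightarrow> int) \<Rightarrow> 'a" where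
  "elt g V c0 c = of_int c0 + (\<Sum>v\<in>V. of_int (c v) * g v)"

definition mx :: "('v \<Rightarrow> 'a::ring_1) \<Rightarrow> 'v set \<Rightarrow> (nat \<Rightarrow> nat \<Rightarrow> int) \<Rightarrow> ('v \<Rightarrow> nat \<Rightarrow> nat \<Rightarrow> int) \<Rightarrow> nat \<Rightarrow> nat \<Rightarrow> 'a" where
  "mx g V A0 A i j = elt g V (A0 i j) (\<lambda>v. A v i j - A0 i j)"

definition orth :: "('v \<Rightarrow> 'a::ring_1) \<Rightarrow> 'v set \<Rightarrow> 'a set \<Rightarrow> bool" where
  "orth g V J \<longleftrightarrow> (\<forall>v\<in>V. \<forall>w\<in>V. g v * g w - (if v = w then g v else 0) \<in> J)"

lemma elt_mult:
  fixes g :: "'v \<Rightarrow> 'a::ring_1"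
  assumes J: "isideal J" and fin: "finite V" and o: "orth g V J"
  shows "elt g V c0 c * elt g V d0 d - elt g V (c0 * d0) (\<lambda>v. c0 * d v + c v * d0 + c v * d v) \<in> J"
proof -
  define Cs where "Cs = (\<Sum>v\<in>V. of_int (c v) * g v)"
  define Ds where "Ds = (\<Sum>v\<in>V. of_int (d v) * g v)"
  have 1: "of_int c0 * Ds = (\<Sum>v\<in>V. of_int (c0 * d v) * g v)"
    unfolding Ds_def by (simp add: sum_distrib_left mult.assoc)
  have 2: "Cs * of_int d0 = (\<Sum>v\<in>V. of_int (c v * d0) * g v)"
    unfolding Cs_def sum_distrib_right
    by (intro sum.cong refl) (metis mult.assoc mult_of_int_commute of_int_mult)
  have 3: "Cs * Ds = (\<Sum>v\<in>V. \<Sum>w\<in>V. of_int (c v * d w) * (g v * g w))"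
    unfolding Cs_def Ds_def sum_product
    by (intro sum.cong refl) (metis mult.assoc mult_of_int_commute of_int_mult)
  have 4: "(\<Sum>v\<in>V. of_int (c v * d v) * g v) = (\<Sum>v\<in>V. \<Sum>w\<in>V. of_int (c v * d w) * (if v = w then g v else 0))"
    using fin by (intro sum.cong refl) (simp add: if_distrib cong: if_cong)
  have 5: "elt g V (c0 * d0) (\<lambda>v. c0 * d v + c v * d0 + c v * d v)
     = of_int c0 * of_int d0 + (\<Sum>v\<in>V. of_int (c0 * d v) * g v) + (\<Sum>v\<in>V. of_int (c v * d0) * g v)
       + (\<Sum>v\<in>V. of_int (c v * d v) * g v)"
    unfolding elt_def by (simp add: sum.distrib distrib_right)
  have "elt g V c0 c * elt g V d0 d = of_int c0 * of_int d0 + of_int c0 * Ds + Cs * of_int d0 + Cs * Ds"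
    unfolding elt_def Cs_def[symmetric] Ds_def[symmetric] by (simp add: algebra_simps)
  then have "elt g V c0 c * elt g V d0 d - elt g V (c0 * d0) (\<lambda>v. c0 * d v + c v * d0 + c v * d v)
     = (\<Sum>v\<in>V. \<Sum>w\<in>V. of_int (c v * d w) * (g v * g w - (if v = w then g v else 0)))"
    unfolding 5 1 2 3 4 by (simp add: right_diff_distrib sum_subtractf)
  also have "\<dots> \<in> J"
    using o unfolding orth_def by (intro isideal_sum[OF J] isideal_ml[OF J]) auto
  finally show ?thesis .
qed

lemma elt_sum:
  "finite L \<Longrightarrow> (\<Sum>l\<in>L. elt g V (a l) (c l)) = elt g V (\<Sum>l\<in>L. a l) (\<lambda>v. \<Sum>l\<in>L. c l v)"
  unfolding elt_def by (simp add: sum.distrib sum_distrib_right sum.swap[of _ L])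

lemma mx_mult:
  fixes g :: "'v \<Rightarrow> 'a::ring_1"
  assumes J: "isideal J" and fin: "finite V" and o: "orth g V J"
  shows "mcong J n (mmul n (mx g V A0 A) (mx g V B0 B)) (mx g V (mmul n A0 B0) (\<lambda>v. mmul n (A v) (B v)))"
  unfolding mcong_def
proof (intro ballI)
  fix i j
  define T where "T l = elt g V (A0 i l * B0 l j) (\<lambda>v. A v i l * B v l j - A0 i l * B0 l j)" for l
  have eqT: "(\<lambda>v. A0 i l * (B v l j - B0 l j) + (A v i l - A0 i l) * B0 l j + (A v i l - A0 i l) * (B v l j - B0 l j))
       = (\<lambda>v. A v i l * B v l j - A0 i l * B0 l j)" for l
    by (rule ext) (simp add: algebra_simps)
  have el: "mx g V A0 A i l * mx g V B0 B l j - T l \<in> J" for l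
    unfolding mx_def T_def by (subst eqT[symmetric]) (rule elt_mult[OF J fin o])
  have "mmul n (mx g V A0 A) (mx g V B0 B) i j - (\<Sum>l\<in>{1..n}. T l) = (\<Sum>l\<in>{1..n}. mx g V A0 A i l * mx g V B0 B l j - T l)"
    unfolding mmul_def by (simp add: sum_subtractf)
  also have "\<dots> \<in> J" using el by (intro isideal_sum[OF J])
  finally have "mmul n (mx g V A0 A) (mx g V B0 B) i j - (\<Sum>l\<in>{1..n}. T l) \<in> J" .
  moreover have "(\<Sum>l\<in>{1..n}. T l) = mx g V (mmul n A0 B0) (\<lambda>v. mmul n (A v) (B v)) i j"
    unfolding T_def mx_def mmul_def by (subst elt_sum) (simp_all add: sum_subtractf)
  ultimately show "mmul n (mx g V A0 A) (mx g V B0 B) i j - mx g V (mmul n A0 B0) (\<lambda>v. mmul n (A v) (B v)) i j \<in> J"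
    by simp
qed

lemma mx_cong:
  assumes "A0 i j = A0' i j" "\<And>v. v \<in> V \<Longrightarrow> A v i j = A' v i j"
  shows "mx g V A0 A i j = mx g V A0' A' i j"
  unfolding mx_def elt_def using assms by (simp cong: sum.cong)

lemma mx_mone_all: "mx g V mone (\<lambda>v. mone) = mone"
  by (simp add: fun_eq_iff mx_def elt_def mone_def)



lemma mx_single_elem:
  fixes g :: "'v \<Rightarrow> 'a::ring_1"
  assumes fin: "finite V" and w: "w \<in> V" and pq: "p \<noteq> q"
  shows "mx g V mone (\<lambda>v. if v = w then elem p q a else mone) i j = elem p q (of_int a * g w) i j"
proof -
  have "(\<Sum>v\<in>V. of_int ((if v = w then elem p q a else mone) i j - mone i j) * g v)
      = (\<Sum>v\<in>V. if v = w then of_int (elem p q a i j - mone i j) * g w else 0)"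
    by (intro sum.cong refl) auto
  also have "\<dots> = of_int (elem p q a i j - mone i j) * g w" using fin w by simp
  finally show ?thesis using pq unfolding mx_def elt_def by (auto simp: elem_def mone_def)
qed

lemma Lsingle:
  fixes g :: "'v \<Rightarrow> 'a::ring_1"
  assumes J: "isideal J" and fin: "finite V" and o: "orth g V J" and w: "w \<in> V"
    and X: "X \<in> elem_group n"
  shows "Ebar J n (mx g V mone (\<lambda>v. if v = w then X else mone))"
  using X
proof induction
  case one
  have "mx g V mone (\<lambda>v. if v = w then mone else mone) = (mone :: nat \<Rightarrow> nat \<Rightarrow> 'a)"
    using mx_mone_all[of g V] by simp
  then show ?case using Ebar_mone[OF J] by simp
next
  case (step W p q a)
  have c1: "mcong J n (mx g V mone (\<lambda>v. if v = w then mmul n (elem p q a) W else mone))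
      (mx g V (mmul n mone mone) (\<lambda>v. mmul n (if v = w then elem p q a else mone) (if v = w then W else mone)))"
    by (rule mcong_eq[OF J], rule mx_cong) (auto simp: mmul_mone_left)
  have e: "Ebar J n (mx g V mone (\<lambda>v. if v = w then elem p q a else mone))"
    by (rule Ebar_cong[OF J _ Ebar_elem[OF J step(2,3,4)]], rule mcong_eq[OF J])
       (simp add: mx_single_elem[OF fin w step(4)])
  show ?case
    by (rule Ebar_cong[OF J mcong_trans[OF J c1 mcong_sym[OF J mx_mult[OF J fin o]]]])
       (rule Ebar_mult[OF J e step(5)])
qed

lemma Lall:
  fixes g :: "'v \<Rightarrow> 'a::ring_1"
  assumes J: "isideal J" and fin: "finite V" and o: "orth g V J"
  shows "distinct ws \<Longrightarrow> set ws \<subseteq> V \<Longrightarrow> (\<forall>v\<in>set ws. A v \<in> elem_group n) \<Longrightarrow>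
    Ebar J n (mx g V mone (\<lambda>v. if v \<in> set ws then A v else mone))"
proof (induction ws)
  case Nil
  then show ?case using mx_mone_all[of g V] Ebar_mone[OF J] by simp
next
  case (Cons w ws)
  have c1: "mcong J n (mx g V mone (\<lambda>v. if v \<in> set (w # ws) then A v else mone))
      (mx g V (mmul n mone mone) (\<lambda>v. mmul n (if v = w then A w else mone) (if v \<in> set ws then A v else mone)))"
    using Cons.prems(1)
    by (intro mcong_eq[OF J] mx_cong) (auto simp: mmul_mone_left mmul_mone_right)
  have e: "Ebar J n (mx g V mone (\<lambda>v. if v = w then A w else mone))"
    using Cons.prems by (intro Lsingle[OF J fin o]) auto
  have e2: "Ebar J n (mx g V mone (\<lambda>v. if v \<in> set ws then A v else mone))"
    using Cons.prems by (intro Cons.IH) auto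
  show ?case
    by (rule Ebar_cong[OF J mcong_trans[OF J c1 mcong_sym[OF J mx_mult[OF J fin o]]]])
       (rule Ebar_mult[OF J e e2])
qed

lemma Lmain:
  fixes g :: "'v \<Rightarrow> 'a::ring_1"
  assumes J: "isideal J" and fin: "finite V" and o: "orth g V J"
    and A: "\<And>v. v \<in> V \<Longrightarrow> Ebar {0::int} n (A v)"
  shows "Ebar J n (mx g V mone A)"
proof -
  have "\<forall>v\<in>V. \<exists>W. W \<in> elem_group n \<and> mcong {0::int} n (A v) W"
    using A unfolding Ebar_def by blast
  then obtain W where W: "\<And>v. v \<in> V \<Longrightarrow> W v \<in> elem_group n \<and> mcong {0::int} n (A v) (W v)"
    by metis
  obtain ws where ws: "set ws = V" "distinct ws" using finite_distinct_list[OF fin] by blast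
  have "Ebar J n (mx g V mone (\<lambda>v. if v \<in> set ws then W v else mone))"
    using ws W by (intro Lall[OF J fin o]) auto
  moreover have "mcong J n (mx g V mone A) (mx g V mone (\<lambda>v. if v \<in> set ws then W v else mone))"
    using W ws by (intro mcong_eq[OF J] mx_cong) (auto simp: mcong_def)
  ultimately show ?thesis using Ebar_cong[OF J] by blast
qed



definition SW :: "nat \<Rightarrow> nat \<Rightarrow> nat \<Rightarrow> nat \<Rightarrow> nat \<Rightarrow> int" where
  "SW a b k i j = (if i = Transposition.transpose a b j then (if j = k then -1 else 1) else 0)"

lemma transpose_in: "a \<in> {1..n} \<Longrightarrow> b \<in> {1..n} \<Longrightarrow> i \<in> {1..n} \<Longrightarrow> Transposition.transpose a b i \<in> {1..n}"
  by (simp add: Transposition.transpose_def)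

lemma SW_row:
  assumes "a \<in> {1..n}" "b \<in> {1..n}" "i \<in> {1..n}"
  shows "mmul n (SW a b k) B i j = SW a b k i (Transposition.transpose a b i) * B (Transposition.transpose a b i) j"
  by (rule mmul_row_sparse) (use assms in \<open>auto simp: transpose_in SW_def Transposition.transpose_def\<close>)

lemma SW_base:
  assumes ab: "a \<in> {1..n}" "b \<in> {1..n}" "a \<noteq> b"
  shows "Ebar {0::int} n (SW a b a)"
proof -
  have e: "Ebar {0::int} n (mmul n (elem a b 1) (mmul n (elem b a (-1)) (elem a b 1)))"
    using ab by (intro Ebar_mult isideal_int0 Ebar_elem) auto
  have "mcong {0::int} n (SW a b a) (mmul n (elem a b 1) (mmul n (elem b a (-1)) (elem a b 1)))"
    using ab by (intro mcong_eq isideal_int0)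
      (simp add: mmul_elem_left, auto simp: SW_def Transposition.transpose_def elem_def)
  then show ?thesis using Ebar_cong[OF isideal_int0] e by blast
qed

lemma SW_all:
  assumes ab: "a \<in> {1..n}" "b \<in> {1..n}" "a \<noteq> b" and k: "k \<in> {1..n}"
  shows "Ebar {0::int} n (SW a b k)"
proof -
  consider "k = a" | "k = b" | "k \<noteq> a" "k \<noteq> b" by blast
  then show ?thesis
  proof cases
    case 1 then show ?thesis using SW_base[OF ab] by simp
  next
    case 2
    have "SW a b b = SW b a b" by (simp add: SW_def fun_eq_iff transpose_commute)
    then show ?thesis using SW_base[of b n a] ab 2 by auto
  next
    case 3
    have e: "Ebar {0::int} n (mmul n (SW a b a) (mmul n (SW a k a) (SW a k a)))"
      using ab k 3 by (intro Ebar_mult isideal_int0 SW_base) auto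
    have "mcong {0::int} n (SW a b k) (mmul n (SW a b a) (mmul n (SW a k a) (SW a k a)))"
    proof (intro mcong_eq isideal_int0)
      fix i j assume ij: "i \<in> {1..n}" "j \<in> {1..n}"
      have t1: "Transposition.transpose a b i \<in> {1..n}" by (rule transpose_in[OF ab(1,2) ij(1)])
      show "SW a b k i j = mmul n (SW a b a) (mmul n (SW a k a) (SW a k a)) i j"
        unfolding SW_row[OF ab(1,2) ij(1)] SW_row[OF ab(1) k t1]
        using ab 3 by (cases "i = a"; cases "i = b"; cases "i = k") (auto simp: SW_def Transposition.transpose_def)
    qed
    then show ?thesis using Ebar_cong[OF isideal_int0] e by blast
  qed
qed

definition Rq :: "(nat \<Rightarrow> nat) \<Rightarrow> nat \<Rightarrow> nat \<Rightarrow> nat \<Rightarrow> int" where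
  "Rq q k i j = (if j = q i then (if j = k then sign q else 1) else 0)"

lemma Rq_E:
  assumes q: "q permutes {1..n}" and k: "k \<in> {1..n}"
  shows "Ebar {0::int} n (Rq q k)"
  using finite_atLeastAtMost q
proof (induction q rule: permutes_rev_induct)
  case id
  have "mcong {0::int} n (Rq id k) mone"
    by (intro mcong_eq isideal_int0) (simp add: Rq_def mone_def)
  then show ?case using Ebar_cong[OF isideal_int0] Ebar_mone[OF isideal_int0] by blast
next
  case (swap a b p)
  let ?t = "Transposition.transpose a b"
  have pS: "p permutes {1..n}" using swap by blast
  have IH: "Ebar {0::int} n (Rq p k)" using swap by blast
  have ab: "a \<in> {1..n}" "b \<in> {1..n}" "a \<noteq> b" using swap by blast+
  have perm: "permutation p" using permutes_imp_permutation[OF _ pS] by simp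
  have sg: "sign (p \<circ> ?t) = - sign p"
    using ab(3) by (simp add: sign_compose[OF perm permutation_swap_id] sign_swap_id)
  have ik: "inv p k \<in> {1..n}" using permutes_in_image[OF permutes_inv[OF pS]] k by blast
  have e: "Ebar {0::int} n (mmul n (SW a b (inv p k)) (Rq p k))"
    by (rule Ebar_mult[OF isideal_int0 SW_all[OF ab ik] IH])
  have key: "p (?t i) = k \<longleftrightarrow> ?t i = inv p k" for i
    using permutes_inverses[OF pS] by metis
  have "mcong {0::int} n (Rq (p \<circ> ?t) k) (mmul n (SW a b (inv p k)) (Rq p k))"
  proof (intro mcong_eq isideal_int0)
    fix i j assume ij: "i \<in> {1..n}" "j \<in> {1..n}"
    show "Rq (p \<circ> ?t) k i j = mmul n (SW a b (inv p k)) (Rq p k) i j"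
      unfolding SW_row[OF ab(1,2) ij(1)] using key[of i]
      by (simp add: Rq_def SW_def sg)
  qed
  then show ?case using Ebar_cong[OF isideal_int0] e by blast
qed



lemma lpstar_gen: "lpstar (gen (Vx v) :: ('v, 'e, 'k::field) freealg) = gen (Vx v)"
  by (simp add: lpstar_def gen_def)

lemma lpstar_zero: "lpstar (0 :: ('v, 'e, 'k::field) freealg) = 0"
  by (simp add: lpstar_def)

lemma lpstar_sum_unique:
  assumes fin: "finite V" and u: "\<And>v w. v \<in> V \<Longrightarrow> w \<in> V \<Longrightarrow> P v \<Longrightarrow> P w \<Longrightarrow> v = w"
  shows "lpstar (\<Sum>v\<in>V. if P v then gen (Vx v) else 0 :: ('v, 'e, 'k::field) freealg)
       = (\<Sum>v\<in>V. if P v then gen (Vx v) else 0)"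
proof (cases "\<exists>v\<in>V. P v")
  case True
  then obtain v0 where v0: "v0 \<in> V" "P v0" by blast
  have "(\<Sum>v\<in>V. if P v then gen (Vx v) else 0 :: ('v, 'e, 'k::field) freealg)
      = (\<Sum>v\<in>V. if v = v0 then gen (Vx v0) else 0)"
    using u v0 by (intro sum.cong refl) auto
  also have "\<dots> = gen (Vx v0)" using fin v0 by simp
  finally show ?thesis by (simp add: lpstar_gen)
next
  case False
  then have "(\<Sum>v\<in>V. if P v then gen (Vx v) else 0 :: ('v, 'e, 'k::field) freealg) = 0"
    by (intro sum.neutral) auto
  then show ?thesis by (simp add: lpstar_zero)
qed

lemma perm_in_range:
  assumes "\<sigma> permutes Z" "Z \<subseteq> {1..n}" "i \<in> {1..n}"
  shows "\<sigma> i \<in> {1..n}" "inv \<sigma> i \<in> {1..n}"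
proof -
  show "\<sigma> i \<in> {1..n}"
  proof (cases "i \<in> Z")
    case True then have "\<sigma> i \<in> Z" using permutes_in_image[OF assms(1)] by simp
    then show ?thesis using assms(2) by blast
  next
    case False then show ?thesis using permutes_not_in[OF assms(1)] assms(3) by simp
  qed
  have p: "inv \<sigma> permutes Z" using permutes_inv[OF assms(1)] .
  show "inv \<sigma> i \<in> {1..n}"
  proof (cases "i \<in> Z")
    case True then have "inv \<sigma> i \<in> Z" using permutes_in_image[OF p] by simp
    then show ?thesis using assms(2) by blast
  next
    case False then show ?thesis using permutes_not_in[OF p] assms(3) by simp
  qed
qed

lemma I1:
  assumes s: "\<sigma> permutes Z" and Z: "Z \<subseteq> {1..n}" and ij: "i \<in> {1..n}"
  shows "mmul n (\<lambda>i j. if i \<in> Z \<and> j = \<sigma> i then 1 else 0) (\<lambda>i j. if j \<in> Z \<and> i = \<sigma> j then 1 else 0) i j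
      = (if i \<in> Z \<and> j = i then 1 else (0::int))"
proof -
  have "mmul n (\<lambda>i j. if i \<in> Z \<and> j = \<sigma> i then 1 else 0) (\<lambda>i j. if j \<in> Z \<and> i = \<sigma> j then 1 else 0) i j
     = (if i \<in> Z \<and> \<sigma> i = \<sigma> i then 1 else 0) * (if j \<in> Z \<and> \<sigma> i = \<sigma> j then 1 else (0::int))"
    by (rule mmul_row_sparse[where f = \<sigma>]) (use perm_in_range[OF s Z ij] in auto)
  also have "\<dots> = (if i \<in> Z \<and> j = i then 1 else 0)"
    using permutes_inj[OF s] by (auto dest: injD)
  finally show ?thesis .
qed

lemma I2:
  assumes s: "\<sigma> permutes Z" and Z: "Z \<subseteq> {1..n}" and ij: "i \<in> {1..n}"
  shows "mmul n (\<lambda>i j. if j \<in> Z \<and> i = \<sigma> j then 1 else 0) (\<lambda>i j. if i \<in> Z \<and> j = \<sigma> i then 1 else 0) i j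
      = (if i \<in> Z \<and> j = i then 1 else (0::int))"
proof -
  have "mmul n (\<lambda>i j. if j \<in> Z \<and> i = \<sigma> j then 1 else 0) (\<lambda>i j. if i \<in> Z \<and> j = \<sigma> i then 1 else 0) i j
     = (if inv \<sigma> i \<in> Z \<and> i = \<sigma> (inv \<sigma> i) then 1 else 0) * (if inv \<sigma> i \<in> Z \<and> j = \<sigma> (inv \<sigma> i) then 1 else (0::int))"
    by (rule mmul_row_sparse[where f = "inv \<sigma>"]) (use perm_in_range[OF s Z ij] permutes_inverses[OF s] in auto)
  also have "\<dots> = (if i \<in> Z \<and> j = i then 1 else 0)"
    using permutes_inverses[OF s] permutes_in_image[OF permutes_inv[OF s]] by auto
  finally show ?thesis .
qed

lemma I3:
  assumes ij: "i \<in> {1..n}"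
  shows "mmul n (\<lambda>i j. if i \<in> Z \<and> j = i then 1 else 0) (\<lambda>i j. if i \<in> Z \<and> j = i then 1 else 0) i j
      = (if i \<in> Z \<and> j = i then 1 else (0::int))"
  by (subst mmul_row_sparse[where f = id]) (use ij in auto)

lemma I4:
  assumes s: "\<sigma> permutes Z" and Z: "Z \<subseteq> {1..n}" and ij: "i \<in> {1..n}"
  shows "mmul n (\<lambda>i j. if j = \<sigma> i then 1 else 0) (\<lambda>i j. if j = inv \<sigma> i then 1 else 0) i j = (mone i j :: int)"
    "mmul n (\<lambda>i j. if j = inv \<sigma> i then 1 else 0) (\<lambda>i j. if j = \<sigma> i then 1 else 0) i j = (mone i j :: int)"
   apply (subst mmul_row_sparse[where f = \<sigma>])
  using perm_in_range[OF s Z ij] permutes_inverses[OF s] apply (auto simp: mone_def)[3]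
  apply (subst mmul_row_sparse[where f = "inv \<sigma>"])
  using perm_in_range[OF s Z ij] permutes_inverses[OF s] apply (auto simp: mone_def)
  done

lemma mx_extend:
  assumes "finite V" "V' \<subseteq> V" "\<And>v. v \<in> V - V' \<Longrightarrow> A v i j = A0 i j"
  shows "mx g V A0 A i j = mx g V' A0 A i j"
  unfolding mx_def elt_def using assms by (simp add: sum.mono_neutral_right)

lemma mx0_eq: "mx g V 0 A i j = (\<Sum>v\<in>V. of_int (A v i j) * g v)"
  by (simp add: mx_def elt_def)

lemma isideal_lp: "isideal (lp_ideal s r :: ('v, 'e, 'k::field) freealg set)"
  unfolding isideal_def by (auto intro: lp_ideal.intros)

lemma orth_lp: "orth (\<lambda>v. gen (Vx v)) V (lp_ideal s r :: ('v, 'e, 'k::field) freealg set)"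
  by (simp only: orth_def) (blast intro: lp_ideal.rel_vv)



theorem lemma5p4:
  fixes s r :: "'e \<Rightarrow> 'v"
    and Z :: "'v \<Rightarrow> nat set"
    and \<sigma>v :: "'v \<Rightarrow> nat \<Rightarrow> nat"
    and h :: nat
  assumes row_finite: "\<forall>v. finite {e. s e = v}"
    and h_pos: "h > 0"
    and Z_cover: "(\<Union>v. Z v) = {1..h}"
    and Z_disj: "\<forall>v w. v \<noteq> w \<longrightarrow> Z v \<inter> Z w = {}"
    and perm: "\<forall>v. \<sigma>v v permutes Z v"
  defines "J \<equiv> (lp_ideal s r :: ('v, 'e, 'k::field) freealg set)"
    and "S \<equiv> (\<Sum>v\<in>{v. Z v \<noteq> {}}. \<Sum>t\<in>Z v. munit (gen (Vx v)) t (\<sigma>v v t))"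
    and "P \<equiv> (\<Sum>v\<in>{v. Z v \<noteq> {}}. \<Sum>t\<in>Z v. munit (gen (Vx v)) t t)"
  shows "let U = S + (mone - mmul h S (mstar S)) in
         mcong J h (mmul h S (mstar S)) P \<and> mcong J h (mmul h (mstar S) S) P
         \<and> mcong J h (mmul h P P) P \<and> mcong J h (mstar P) P
         \<and> minvertible_mod J h U
         \<and> (\<forall>vs. distinct vs \<and> {v. Z v \<noteq> {}} \<subseteq> set vs \<longrightarrow>
              k1_eq J h U (length vs)
                (mdiag (map (\<lambda>v. of_int (sign (\<sigma>v v)) * gen (Vx v) + (1 - gen (Vx v))) vs)))"
proof -
  define g where "g = (\<lambda>v. gen (Vx v) :: ('v, 'e, 'k) freealg)"
  have J: "isideal J" unfolding J_def by (rule isideal_lp)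
  have o: "orth g V J" for V unfolding J_def g_def by (rule orth_lp)
  define V' where "V' = {v. Z v \<noteq> {}}"
  have Zsub: "Z v \<subseteq> {1..h}" for v using Z_cover by blast
  have finZ: "finite (Z v)" for v using Zsub finite_subset by blast
  have uniq: "v = w" if "i \<in> Z v" "i \<in> Z w" for i v w using Z_disj that by blast
  have finV': "finite V'"
  proof -
    have "inj_on Z V'" unfolding inj_on_def V'_def using Z_disj by blast
    moreover have "finite (Z ` V')" by (rule finite_subset[of _ "Pow {1..h}"]) (use Zsub in auto)
    ultimately show ?thesis using finite_imageD by blast
  qed
  have sp: "\<sigma>v v permutes Z v" for v using perm by blast
  have of_int_if: "\<And>c x. (of_int (if c then 1 else 0) :: ('v, 'e, 'k) freealg) * x = (if c then x else 0)" by simp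
  define Sv where "Sv = (\<lambda>v i j. if i \<in> Z v \<and> j = \<sigma>v v i then 1 else (0::int))"
  define SvT where "SvT = (\<lambda>v i j. if j \<in> Z v \<and> i = \<sigma>v v j then 1 else (0::int))"
  define Pv where "Pv = (\<lambda>v i j. if i \<in> Z v \<and> j = i then 1 else (0::int))"
  define Pm where "Pm = (\<lambda>v i j. if j = \<sigma>v v i then 1 else (0::int))"
  define PmI where "PmI = (\<lambda>v i j. if j = inv (\<sigma>v v) i then 1 else (0::int))"
  have Sent: "S i j = (\<Sum>v\<in>V'. if i \<in> Z v \<and> j = \<sigma>v v i then g v else 0)" for i j
  proof -
    have "S i j = (\<Sum>v\<in>V'. \<Sum>t\<in>Z v. munit (g v) t (\<sigma>v v t) i j)"
      unfolding S_def g_def V'_def by (simp add: sum_apply2)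
    also have "\<dots> = (\<Sum>v\<in>V'. if i \<in> Z v \<and> j = \<sigma>v v i then g v else 0)"
    proof (intro sum.cong refl)
      fix v
      have "(\<Sum>t\<in>Z v. munit (g v) t (\<sigma>v v t) i j) = (\<Sum>t\<in>Z v. if t = i then (if j = \<sigma>v v i then g v else 0) else 0)"
        by (intro sum.cong refl) (auto simp: munit_def)
      also have "\<dots> = (if i \<in> Z v \<and> j = \<sigma>v v i then g v else 0)" using finZ[of v] by simp
      finally show "(\<Sum>t\<in>Z v. munit (g v) t (\<sigma>v v t) i j) = (if i \<in> Z v \<and> j = \<sigma>v v i then g v else 0)" .
    qed
    finally show ?thesis .
  qed
  have Pent: "P i j = (\<Sum>v\<in>V'. if i \<in> Z v \<and> j = i then g v else 0)" for i j
  proof -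
    have "P i j = (\<Sum>v\<in>V'. \<Sum>t\<in>Z v. munit (g v) t t i j)"
      unfolding P_def g_def V'_def by (simp add: sum_apply2)
    also have "\<dots> = (\<Sum>v\<in>V'. if i \<in> Z v \<and> j = i then g v else 0)"
    proof (intro sum.cong refl)
      fix v
      have "(\<Sum>t\<in>Z v. munit (g v) t t i j) = (\<Sum>t\<in>Z v. if t = i then (if j = i then g v else 0) else 0)"
        by (intro sum.cong refl) (auto simp: munit_def)
      also have "\<dots> = (if i \<in> Z v \<and> j = i then g v else 0)" using finZ[of v] by simp
      finally show "(\<Sum>t\<in>Z v. munit (g v) t t i j) = (if i \<in> Z v \<and> j = i then g v else 0)" .
    qed
    finally show ?thesis .
  qed
  have SS: "S = mx g V' 0 Sv"
    by (intro ext) (simp add: Sent mx0_eq Sv_def of_int_if)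
  have SstarS: "mstar S = mx g V' 0 SvT"
  proof (intro ext)
    fix i j
    have "mstar S i j = lpstar (\<Sum>v\<in>V'. if j \<in> Z v \<and> i = \<sigma>v v j then gen (Vx v) else 0)"
      unfolding mstar_def Sent g_def ..
    also have "\<dots> = (\<Sum>v\<in>V'. if j \<in> Z v \<and> i = \<sigma>v v j then gen (Vx v) else 0)"
      by (rule lpstar_sum_unique[OF finV']) (use uniq in blast)
    finally show "mstar S i j = mx g V' 0 SvT i j"
      by (simp add: mx0_eq SvT_def of_int_if g_def)
  qed
  have PP: "P = mx g V' 0 Pv"
    by (intro ext) (simp add: Pent mx0_eq Pv_def of_int_if)
  have PstarP: "mstar P = P"
  proof (intro ext)
    fix i j
    have "mstar P i j = lpstar (\<Sum>v\<in>V'. if j \<in> Z v \<and> i = j then gen (Vx v) else 0)"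
      unfolding mstar_def Pent g_def ..
    also have "\<dots> = (\<Sum>v\<in>V'. if j \<in> Z v \<and> i = j then gen (Vx v) else 0)"
      by (rule lpstar_sum_unique[OF finV']) (use uniq in blast)
    finally show "mstar P i j = P i j"
      unfolding Pent g_def by (auto intro: sum.cong)
  qed
  have c1: "mcong J h (mmul h S (mstar S)) P"
    unfolding SstarS unfolding SS PP
  proof (rule mcong_trans[OF J mx_mult[OF J finV' o]], intro mcong_eq[OF J] mx_cong)
    fix i j v assume ij: "i \<in> {1..h}" "j \<in> {1..h}"
    show "mmul h 0 0 i j = (0 :: nat \<Rightarrow> nat \<Rightarrow> int) i j" by (simp add: mmul_def)
    show "mmul h (Sv v) (SvT v) i j = Pv v i j"
      unfolding Sv_def SvT_def Pv_def by (rule I1[OF sp Zsub ij(1)])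
  qed
  have c2: "mcong J h (mmul h (mstar S) S) P"
    unfolding SstarS unfolding SS PP
  proof (rule mcong_trans[OF J mx_mult[OF J finV' o]], intro mcong_eq[OF J] mx_cong)
    fix i j v assume ij: "i \<in> {1..h}" "j \<in> {1..h}"
    show "mmul h 0 0 i j = (0 :: nat \<Rightarrow> nat \<Rightarrow> int) i j" by (simp add: mmul_def)
    show "mmul h (SvT v) (Sv v) i j = Pv v i j"
      unfolding Sv_def SvT_def Pv_def by (rule I2[OF sp Zsub ij(1)])
  qed
  have c3: "mcong J h (mmul h P P) P"
    unfolding PP
  proof (rule mcong_trans[OF J mx_mult[OF J finV' o]], intro mcong_eq[OF J] mx_cong)
    fix i j v assume ij: "i \<in> {1..h}" "j \<in> {1..h}"
    show "mmul h 0 0 i j = (0 :: nat \<Rightarrow> nat \<Rightarrow> int) i j" by (simp add: mmul_def)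
    show "mmul h (Pv v) (Pv v) i j = Pv v i j"
      unfolding Pv_def by (rule I3[OF ij(1)])
  qed
  have c4: "mcong J h (mstar P) P" unfolding PstarP by (rule mcong_refl[OF J])
  define U where "U = S + (mone - mmul h S (mstar S))"
  have UC: "mcong J h U (mx g V' mone Pm)"
    unfolding mcong_def
  proof (intro ballI)
    fix i j assume ij: "i \<in> {1..h}" "j \<in> {1..h}"
    have pv: "Pm v i j - mone i j = Sv v i j - Pv v i j" for v
      using permutes_not_in[OF sp[of v]] by (cases "i \<in> Z v") (auto simp: Pm_def Sv_def Pv_def mone_def)
    have "mx g V' mone Pm i j = of_int (mone i j) + ((\<Sum>v\<in>V'. of_int (Sv v i j) * g v) - (\<Sum>v\<in>V'. of_int (Pv v i j) * g v))"
      unfolding mx_def elt_def pv by (simp add: sum_subtractf[symmetric] left_diff_distrib)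
    also have "\<dots> = mone i j + S i j - P i j"
      unfolding SS PP mx0_eq by (simp add: mone_def)
    finally have e1: "mx g V' mone Pm i j = mone i j + S i j - P i j" .
    have "U i j - mx g V' mone Pm i j = - (mmul h S (mstar S) i j - P i j)"
      unfolding e1 U_def by simp
    also have "\<dots> \<in> J" using c1 ij unfolding mcong_def by (intro isideal_neg[OF J]) auto
    finally show "U i j - mx g V' mone Pm i j \<in> J" .
  qed
  have c5: "minvertible_mod J h U"
    unfolding minvertible_mod_def
  proof (intro exI conjI)
    have a: "mcong J h (mmul h U (mx g V' mone PmI)) (mmul h (mx g V' mone Pm) (mx g V' mone PmI))"
      by (rule mcong_mmul[OF J UC mcong_refl[OF J]])
    have b: "mcong J h (mx g V' (mmul h mone mone) (\<lambda>v. mmul h (Pm v) (PmI v))) mone"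
    proof (rule mcong_eq[OF J])
      fix i j assume ij: "i \<in> {1..h}" "j \<in> {1..h}"
      have "mx g V' (mmul h mone mone) (\<lambda>v. mmul h (Pm v) (PmI v)) i j = mx g V' mone (\<lambda>v. mone) i j"
        by (rule mx_cong) (use ij in \<open>simp_all add: mmul_mone_left Pm_def PmI_def I4[OF sp Zsub ij(1)]\<close>)
      then show "mx g V' (mmul h mone mone) (\<lambda>v. mmul h (Pm v) (PmI v)) i j = mone i j"
        by (simp add: mx_mone_all)
    qed
    show "mcong J h (mmul h U (mx g V' mone PmI)) mone"
      by (rule mcong_trans[OF J a mcong_trans[OF J mx_mult[OF J finV' o] b]])
    have a2: "mcong J h (mmul h (mx g V' mone PmI) U) (mmul h (mx g V' mone PmI) (mx g V' mone Pm))"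
      by (rule mcong_mmul[OF J mcong_refl[OF J] UC])
    have b2: "mcong J h (mx g V' (mmul h mone mone) (\<lambda>v. mmul h (PmI v) (Pm v))) mone"
    proof (rule mcong_eq[OF J])
      fix i j assume ij: "i \<in> {1..h}" "j \<in> {1..h}"
      have "mx g V' (mmul h mone mone) (\<lambda>v. mmul h (PmI v) (Pm v)) i j = mx g V' mone (\<lambda>v. mone) i j"
        by (rule mx_cong) (use ij in \<open>simp_all add: mmul_mone_left Pm_def PmI_def I4[OF sp Zsub ij(1)]\<close>)
      then show "mx g V' (mmul h mone mone) (\<lambda>v. mmul h (PmI v) (Pm v)) i j = mone i j"
        by (simp add: mx_mone_all)
    qed
    show "mcong J h (mmul h (mx g V' mone PmI) U) mone"
      by (rule mcong_trans[OF J a2 mcong_trans[OF J mx_mult[OF J finV' o] b2]])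
  qed
  have c6: "k1_eq J h U (length vs)
      (mdiag (map (\<lambda>v. of_int (sign (\<sigma>v v)) * gen (Vx v) + (1 - gen (Vx v))) vs))"
    if vs: "distinct vs" "{v. Z v \<noteq> {}} \<subseteq> set vs" for vs
  proof -
    define V where "V = set vs"
    define n' where "n' = length vs"
    define m where "m = max h n'"
    have finV: "finite V" unfolding V_def by simp
    have V'V: "V' \<subseteq> V" using vs(2) unfolding V_def V'_def .
    have Zm: "Z v \<subseteq> {1..m}" for v by (rule subset_trans[OF Zsub]) (auto simp: m_def)
    have spm: "\<sigma>v v permutes {1..m}" for v by (rule permutes_subset[OF sp Zm])
    have "\<forall>v\<in>V. \<exists>k. k \<in> {1..n'} \<and> vs ! (k - 1) = v"
    proof
      fix v assume "v \<in> V"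
      then obtain i where "i < n'" "vs ! i = v" unfolding V_def n'_def by (auto simp: in_set_conv_nth)
      then show "\<exists>k. k \<in> {1..n'} \<and> vs ! (k - 1) = v" by (intro exI[of _ "Suc i"]) auto
    qed
    then obtain kk where kk: "\<And>v. v \<in> V \<Longrightarrow> kk v \<in> {1..n'} \<and> vs ! (kk v - 1) = v" by metis
    have kkiff: "vs ! (j - 1) = v \<longleftrightarrow> j = kk v" if "v \<in> V" "j \<in> {1..n'}" for v j
    proof -
      have "vs ! (j - 1) = vs ! (kk v - 1) \<longleftrightarrow> j - 1 = kk v - 1"
        using nth_eq_iff_index_eq[OF vs(1)] kk[OF that(1)] that(2) unfolding n'_def by auto
      then show ?thesis using kk[OF that(1)] that(2) by auto
    qed
    define C where "C = (\<lambda>v. Rq (\<sigma>v v) (kk v))"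
    define Dg where "Dg = (\<lambda>v i j. if i = j \<and> 1 \<le> i \<and> i \<le> n' \<and> vs ! (i - 1) = v then sign (\<sigma>v v) else (mone i j :: int))"
    have CE: "Ebar {0} m (C v)" if "v \<in> V" for v
      unfolding C_def by (rule Rq_E[OF spm]) (use kk[OF that] in \<open>auto simp: m_def\<close>)
    have "Ebar J m (mx g V mone C)" by (rule Lmain[OF J finV o CE])
    then obtain W where W: "W \<in> elem_group m" "mcong J m (mx g V mone C) W" unfolding Ebar_def by blast
    have KA: "mcong J m (mpad h U) (mx g V mone Pm)"
      unfolding mcong_def
    proof (intro ballI)
      fix i j assume ij: "i \<in> {1..m}" "j \<in> {1..m}"
      show "mpad h U i j - mx g V mone Pm i j \<in> J"
      proof (cases "i \<le> h \<and> j \<le> h")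
        case True
        have "mx g V mone Pm i j = mx g V' mone Pm i j"
        proof (rule mx_extend[OF finV V'V])
          fix v assume "v \<in> V - V'"
          then have "\<sigma>v v = id" using sp[of v] unfolding V'_def by auto
          then show "Pm v i j = mone i j" by (simp add: Pm_def mone_def)
        qed
        then show ?thesis using UC True ij unfolding mcong_def mpad_def by auto
      next
        case False
        have pm: "Pm v i j = mone i j" for v
        proof (cases "i \<le> h")
          case True
          then have "j > h" using False by auto
          moreover have "\<sigma>v v i \<in> {1..h}" using perm_in_range(1)[OF sp Zsub, of i v] True ij by auto
          ultimately show ?thesis using True by (auto simp: Pm_def mone_def)
        next
          case False
          then have "i \<notin> Z v" using Zsub[of v] by auto
          then show ?thesis using permutes_not_in[OF sp[of v]] by (auto simp: Pm_def mone_def)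
        qed
        have "mx g V mone Pm i j = mone i j"
          unfolding mx_def elt_def pm by (simp add: mone_def)
        moreover have "mpad h U i j = mone i j" using False by (auto simp: mpad_def mone_def)
        ultimately show ?thesis by (simp add: isideal_zero[OF J])
      qed
    qed
    have KC: "mcong J m (mx g V mone Pm) (mx g V (mmul m mone mone) (\<lambda>v. mmul m (C v) (Dg v)))"
    proof (intro mcong_eq[OF J] mx_cong)
      fix i j assume ij: "i \<in> {1..m}" "j \<in> {1..m}"
      show "(mone i j :: int) = mmul m mone mone i j" by (simp add: mmul_mone_left[OF ij(1)])
    next
      fix i j v assume ij: "i \<in> {1..m}" "j \<in> {1..m}" and v: "v \<in> V"
      have "mmul m (C v) (Dg v) i j = C v i j * Dg v j j"
        by (rule mmul_col_sparse[where f = "\<lambda>x. x"]) (use ij in \<open>auto simp: Dg_def mone_def\<close>)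
      also have "\<dots> = Pm v i j"
      proof (cases "1 \<le> j \<and> j \<le> n'")
        case True
        then show ?thesis using kkiff[OF v, of j] by (auto simp: C_def Rq_def Dg_def Pm_def mone_def)
      next
        case False
        then have "j \<noteq> kk v" using kk[OF v] by auto
        then show ?thesis using False by (auto simp: C_def Rq_def Dg_def Pm_def mone_def)
      qed
      finally show "Pm v i j = mmul m (C v) (Dg v) i j" by simp
    qed
    have KB: "mcong J m (mx g V mone Dg)
        (mpad n' (mdiag (map (\<lambda>v. of_int (sign (\<sigma>v v)) * gen (Vx v) + (1 - gen (Vx v))) vs)))"
    proof (rule mcong_eq[OF J])
      fix i j assume ij: "i \<in> {1..m}" "j \<in> {1..m}"
      show "mx g V mone Dg i j = mpad n' (mdiag (map (\<lambda>v. of_int (sign (\<sigma>v v)) * gen (Vx v) + (1 - gen (Vx v))) vs)) i j"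
      proof (cases "i = j \<and> i \<le> n'")
        case True
        define w where "w = vs ! (i - 1)"
        have wV: "w \<in> V" unfolding w_def V_def using True ij unfolding n'_def by auto
        have "(\<Sum>v\<in>V. of_int (Dg v i j - mone i j) * g v) = (\<Sum>v\<in>V. if v = w then of_int (sign (\<sigma>v w) - 1) * g w else 0)"
          using True ij by (intro sum.cong refl) (auto simp: Dg_def mone_def w_def)
        also have "\<dots> = of_int (sign (\<sigma>v w) - 1) * g w" using finV wV by simp
        finally have "mx g V mone Dg i j = 1 + of_int (sign (\<sigma>v w) - 1) * g w"
          unfolding mx_def elt_def using True by (simp add: mone_def)
        also have "\<dots> = of_int (sign (\<sigma>v w)) * gen (Vx w) + (1 - gen (Vx w))"
          unfolding g_def by (simp add: of_int_diff left_diff_distrib)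
        finally show ?thesis using True ij unfolding mpad_def mdiag_def n'_def w_def by auto
      next
        case False
        have "Dg v i j = mone i j" for v using False by (auto simp: Dg_def)
        then have "mx g V mone Dg i j = mone i j" unfolding mx_def elt_def by (simp add: mone_def)
        then show ?thesis using False ij unfolding mpad_def mdiag_def mone_def n'_def by auto
      qed
    qed
    have "mcong J m (mpad h U)
        (mmul m W (mpad n' (mdiag (map (\<lambda>v. of_int (sign (\<sigma>v v)) * gen (Vx v) + (1 - gen (Vx v))) vs))))"
      by (rule mcong_trans[OF J KA mcong_trans[OF J KC mcong_trans[OF J mcong_sym[OF J mx_mult[OF J finV o]]
            mcong_mmul[OF J W(2) KB]]]])
    then show ?thesis unfolding k1_eq_def using W(1) unfolding m_def n'_def by (intro exI[of _ "max h (length vs)"]) auto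
  qed
  show ?thesis unfolding Let_def U_def[symmetric] using c1 c2 c3 c4 c5 c6 by blast
qed

end
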